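(* Let $A$ be a von Neumann algebra acting on a Hilbert space $\mathcal H$, and let $\psi\in\mathcal H$ be a unit vector with associated rank-one projection $P_\psi=|\psi\rangle\langle\psi|$. Define $\mu^0_\psi:\mathcal O\Sigma_\ast\to\{\text{functions }\mathcal V(A)\to[0,1]\}$ by $\mu^0_\psi(U)(C)=1$ if for every $C'\in\mathcal V(A)$ with $C\subseteq C'$ and $P_\psi\in C'$ one has $X^{C'}_{P_\psi}\subseteq U_{C'}$, and $\mu^0_\psi(U)(C)=0$ otherwise. Then each $\mu^0_\psi(U)$ is order-preserving, and for all $C\in\mathcal V(A)$: (1) $U\subseteq V$ implies $\mu^0_\psi(U)(C)\le\mu^0_\psi(V)(C)$; (3) $\mu^0_\psi(U)(C)+\mu^0_\psi(V)(C)=\mu^0_\psi(U\cap V)(C)+\mu^0_\psi(U\cup V)(C)$ for all $U,V\in\mathcal O\Sigma_\ast$; (4) for every directed family $\{U_i\}_{i\in I}\subseteq\mathcal O\Sigma_\ast$, $\mu^0_\psi(\bigcup_iU_i)(C)=\sup_i\mu^0_\psi(U_i)(C)$.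
   Context: $\mathcal V(A)$ is the poset (under inclusion) of abelian von Neumann subalgebras of $A$ containing the unit. For $C\in\mathcal V(A)$, $\Sigma_C$ is its Gelfand spectrum; for $b\in C_{sa}$, $X^C_b=\{\lambda\in\Sigma_C\mid\lambda(b)>0\}$. Let $\Sigma=\{(C,\lambda)\mid C\in\mathcal V(A),\lambda\in\Sigma_C\}$ and $U_C=\{\lambda\mid (C,\lambda)\in U\}$. The space $\Sigma_\ast$ is $\Sigma$ with the topology $\mathcal O\Sigma_\ast$ in which $U$ is open iff (1) each $U_C$ is open in $\Sigma_C$, and (2) if $\lambda\in U_C$, $C\subseteq C'$ and $\lambda'\in\Sigma_{C'}$ with $\lambda'|_C=\lambda$, then $\lambda'\in U_{C'}$. A function $\mathcal V(A)\to[0,1]$ is order-preserving if $C\subseteq C'$ implies $f(C)\le f(C')$. *)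

theory Defs
  imports "HOL-Analysis.Analysis"
begin

text \<open>A complex Hilbert space is given on a carrier type 'h (an abelian group)
  by a complex scalar multiplication sc and an inner product ip,
  conjugate-linear in the first and linear in the second argument.\<close>

definition hnorm :: "('h \<Rightarrow> 'h \<Rightarrow> complex) \<Rightarrow> 'h \<Rightarrow> real" where
  "hnorm ip x = sqrt (Re (ip x x))"

definition hilbert_space ::
  "(complex \<Rightarrow> 'h::ab_group_add \<Rightarrow> 'h) \<Rightarrow> ('h \<Rightarrow> 'h \<Rightarrow> complex) \<Rightarrow> bool" where
  "hilbert_space sc ip \<longleftrightarrow>
     vector_space sc \<and>
     (\<forall>x y z. ip x (y + z) = ip x y + ip x z) \<and>
     (\<forall>x y c. ip x (sc c y) = c * ip x y) \<and>
     (\<forall>x y. ip y x = cnj (ip x y)) \<and>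
     (\<forall>x. Im (ip x x) = 0 \<and> Re (ip x x) \<ge> 0) \<and>
     (\<forall>x. ip x x = 0 \<longrightarrow> x = 0) \<and>
     (\<forall>X::nat \<Rightarrow> 'h. (\<forall>e>0. \<exists>N. \<forall>m\<ge>N. \<forall>n\<ge>N. hnorm ip (X m - X n) < e) \<longrightarrow>
        (\<exists>L. (\<lambda>n. hnorm ip (X n - L)) \<longlonglongrightarrow> 0))"

definition bounded_op ::
  "(complex \<Rightarrow> 'h::ab_group_add \<Rightarrow> 'h) \<Rightarrow> ('h \<Rightarrow> 'h \<Rightarrow> complex) \<Rightarrow> ('h \<Rightarrow> 'h) \<Rightarrow> bool" where
  "bounded_op sc ip T \<longleftrightarrow>
     (\<forall>x y. T (x + y) = T x + T y) \<and> (\<forall>c x. T (sc c x) = sc c (T x)) \<and>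
     (\<exists>K. \<forall>x. hnorm ip (T x) \<le> K * hnorm ip x)"

definition commutant ::
  "(complex \<Rightarrow> 'h::ab_group_add \<Rightarrow> 'h) \<Rightarrow> ('h \<Rightarrow> 'h \<Rightarrow> complex) \<Rightarrow> ('h \<Rightarrow> 'h) set \<Rightarrow> ('h \<Rightarrow> 'h) set" where
  "commutant sc ip S = {T. bounded_op sc ip T \<and> (\<forall>R\<in>S. T \<circ> R = R \<circ> T)}"

definition von_neumann_algebra ::
  "(complex \<Rightarrow> 'h::ab_group_add \<Rightarrow> 'h) \<Rightarrow> ('h \<Rightarrow> 'h \<Rightarrow> complex) \<Rightarrow> ('h \<Rightarrow> 'h) set \<Rightarrow> bool" where
  "von_neumann_algebra sc ip A \<longleftrightarrow>
     (\<forall>T\<in>A. bounded_op sc ip T) \<and>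
     (\<forall>T\<in>A. \<exists>S\<in>A. \<forall>x y. ip (T x) y = ip x (S y)) \<and>
     commutant sc ip (commutant sc ip A) = A"

definition abelian_subalgebras ::
  "(complex \<Rightarrow> 'h::ab_group_add \<Rightarrow> 'h) \<Rightarrow> ('h \<Rightarrow> 'h \<Rightarrow> complex) \<Rightarrow> ('h \<Rightarrow> 'h) set \<Rightarrow> ('h \<Rightarrow> 'h) set set" where
  "abelian_subalgebras sc ip A =
     {C. C \<subseteq> A \<and> von_neumann_algebra sc ip C \<and> id \<in> C \<and> (\<forall>a\<in>C. \<forall>b\<in>C. a \<circ> b = b \<circ> a)}"

text \<open>Gelfand spectrum of C: nonzero multiplicative linear functionals on C
  (characters), represented extensionally (value 0 outside C).\<close>
definition gelfand_spectrum ::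
  "(complex \<Rightarrow> 'h::ab_group_add \<Rightarrow> 'h) \<Rightarrow> ('h \<Rightarrow> 'h) set \<Rightarrow> (('h \<Rightarrow> 'h) \<Rightarrow> complex) set" where
  "gelfand_spectrum sc C =
     {l. (\<forall>a. a \<notin> C \<longrightarrow> l a = 0) \<and>
         (\<forall>a\<in>C. \<forall>b\<in>C. l (\<lambda>x. a x + b x) = l a + l b) \<and>
         (\<forall>a\<in>C. \<forall>c. l (\<lambda>x. sc c (a x)) = c * l a) \<and>
         (\<forall>a\<in>C. \<forall>b\<in>C. l (a \<circ> b) = l a * l b) \<and>
         (\<exists>a\<in>C. l a \<noteq> 0)}"

definition gelfand_topology ::
  "(complex \<Rightarrow> 'h::ab_group_add \<Rightarrow> 'h) \<Rightarrow> ('h \<Rightarrow> 'h) set \<Rightarrow> (('h \<Rightarrow> 'h) \<Rightarrow> complex) topology" where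
  "gelfand_topology sc C =
     topology_generated_by {{l \<in> gelfand_spectrum sc C. l a \<in> W} | a W. a \<in> C \<and> open W}"

definition Xset ::
  "(complex \<Rightarrow> 'h::ab_group_add \<Rightarrow> 'h) \<Rightarrow> ('h \<Rightarrow> 'h) set \<Rightarrow> ('h \<Rightarrow> 'h) \<Rightarrow> (('h \<Rightarrow> 'h) \<Rightarrow> complex) set" where
  "Xset sc C b = {l \<in> gelfand_spectrum sc C. Im (l b) = 0 \<and> Re (l b) > 0}"

text \<open>The spectral presheaf as a set of pairs (C, \<lambda>).\<close>
definition Sigma_tot ::
  "(complex \<Rightarrow> 'h::ab_group_add \<Rightarrow> 'h) \<Rightarrow> ('h \<Rightarrow> 'h \<Rightarrow> complex) \<Rightarrow> ('h \<Rightarrow> 'h) set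
     \<Rightarrow> (('h \<Rightarrow> 'h) set \<times> (('h \<Rightarrow> 'h) \<Rightarrow> complex)) set" where
  "Sigma_tot sc ip A = {(C, l). C \<in> abelian_subalgebras sc ip A \<and> l \<in> gelfand_spectrum sc C}"

definition fiber :: "('c \<times> 'l) set \<Rightarrow> 'c \<Rightarrow> 'l set" where
  "fiber U C = {l. (C, l) \<in> U}"

definition restrict_char :: "('o \<Rightarrow> complex) \<Rightarrow> 'o set \<Rightarrow> 'o \<Rightarrow> complex" where
  "restrict_char l C = (\<lambda>a. if a \<in> C then l a else 0)"

definition opens_star ::
  "(complex \<Rightarrow> 'h::ab_group_add \<Rightarrow> 'h) \<Rightarrow> ('h \<Rightarrow> 'h \<Rightarrow> complex) \<Rightarrow> ('h \<Rightarrow> 'h) set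
     \<Rightarrow> (('h \<Rightarrow> 'h) set \<times> (('h \<Rightarrow> 'h) \<Rightarrow> complex)) set set" where
  "opens_star sc ip A =
     {U. U \<subseteq> Sigma_tot sc ip A \<and>
         (\<forall>C\<in>abelian_subalgebras sc ip A. openin (gelfand_topology sc C) (fiber U C)) \<and>
         (\<forall>C\<in>abelian_subalgebras sc ip A. \<forall>C'\<in>abelian_subalgebras sc ip A.
            \<forall>l\<in>fiber U C. \<forall>l'\<in>gelfand_spectrum sc C'.
              C \<subseteq> C' \<and> restrict_char l' C = l \<longrightarrow> l' \<in> fiber U C')}"

definition rank_one_proj ::
  "(complex \<Rightarrow> 'h \<Rightarrow> 'h) \<Rightarrow> ('h \<Rightarrow> 'h \<Rightarrow> complex) \<Rightarrow> 'h \<Rightarrow> ('h \<Rightarrow> 'h)" where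
  "rank_one_proj sc ip \<psi> = (\<lambda>x. sc (ip \<psi> x) \<psi>)"

definition mu0 ::
  "(complex \<Rightarrow> 'h::ab_group_add \<Rightarrow> 'h) \<Rightarrow> ('h \<Rightarrow> 'h \<Rightarrow> complex) \<Rightarrow> ('h \<Rightarrow> 'h) set \<Rightarrow> 'h
     \<Rightarrow> (('h \<Rightarrow> 'h) set \<times> (('h \<Rightarrow> 'h) \<Rightarrow> complex)) set \<Rightarrow> ('h \<Rightarrow> 'h) set \<Rightarrow> real" where
  "mu0 sc ip A \<psi> U C =
     (if \<forall>C'\<in>abelian_subalgebras sc ip A. C \<subseteq> C' \<and> rank_one_proj sc ip \<psi> \<in> C' \<longrightarrow>
            Xset sc C' (rank_one_proj sc ip \<psi>) \<subseteq> fiber U C'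
      then 1 else 0)"

end

theory Submission imports Defs begin

context
  fixes sc :: "complex \<Rightarrow> 'h::ab_group_add \<Rightarrow> 'h" and ip :: "'h \<Rightarrow> 'h \<Rightarrow> complex"
  assumes H: "hilbert_space sc ip"
begin

lemma H': "vector_space sc \<and>
     (\<forall>x y z. ip x (y + z) = ip x y + ip x z) \<and>
     (\<forall>x y c. ip x (sc c y) = c * ip x y) \<and>
     (\<forall>x y. ip y x = cnj (ip x y)) \<and>
     (\<forall>x. Im (ip x x) = 0 \<and> Re (ip x x) \<ge> 0) \<and>
     (\<forall>x. ip x x = 0 \<longrightarrow> x = 0) \<and>
     (\<forall>X::nat \<Rightarrow> 'h. (\<forall>e>0. \<exists>N. \<forall>m\<ge>N. \<forall>n\<ge>N. hnorm ip (X m - X n) < e) \<longrightarrow>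
        (\<exists>L. (\<lambda>n. hnorm ip (X n - L)) \<longlonglongrightarrow> 0))"
  using H unfolding hilbert_space_def .

lemma vs: "vector_space sc" using conjunct1[OF H'] .
lemma sc_scale: "sc a (sc b x) = sc (a*b) x"
  by (rule vector_space.vector_space_assms(3)[OF vs])
lemma sc_add: "sc a (x + y) = sc a x + sc a y"
  by (rule vector_space.vector_space_assms(1)[OF vs])
lemma ip_add_r: "ip x (y + z) = ip x y + ip x z"
  using conjunct1[OF conjunct2[OF H']] by blast
lemma ip_sc_r: "ip x (sc c y) = c * ip x y"
  using conjunct1[OF conjunct2[OF conjunct2[OF H']]] by blast
lemma ip_cnj: "ip y x = cnj (ip x y)"
  using conjunct1[OF conjunct2[OF conjunct2[OF conjunct2[OF H']]]] by blast
lemma ip_real: "Im (ip x x) = 0" and ip_nonneg: "Re (ip x x) \<ge> 0"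
  using conjunct1[OF conjunct2[OF conjunct2[OF conjunct2[OF conjunct2[OF H']]]]] by blast+
lemma ip_zero: "ip x x = 0 \<Longrightarrow> x = 0"
  using conjunct1[OF conjunct2[OF conjunct2[OF conjunct2[OF conjunct2[OF conjunct2[OF H']]]]]] by blast

lemma ip_add_l: "ip (y + z) x = ip y x + ip z x"
proof -
  have "ip (y + z) x = cnj (ip x (y + z))" by (rule ip_cnj)
  also have "\<dots> = cnj (ip x y) + cnj (ip x z)" by (simp add: ip_add_r)
  also have "\<dots> = ip y x + ip z x" by (simp add: ip_cnj[of y x, symmetric] ip_cnj[of z x, symmetric])
  finally show ?thesis .
qed
lemma ip_diff_r: "ip x (y - z) = ip x y - ip x z"
proof -
  have "ip x (y - z) + ip x z = ip x y" using ip_add_r[of x "y - z" z] by simp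
  thus ?thesis by (simp add: algebra_simps)
qed
lemma ip_diff_l: "ip (y - z) x = ip y x - ip z x"
proof -
  have "ip (y - z) x + ip z x = ip y x" using ip_add_l[of "y - z" z x] by simp
  thus ?thesis by (simp add: algebra_simps)
qed
lemma ip_sc_l: "ip (sc c y) x = cnj c * ip y x"
proof -
  have "ip (sc c y) x = cnj (ip x (sc c y))" by (rule ip_cnj)
  also have "\<dots> = cnj c * cnj (ip x y)" by (simp add: ip_sc_r)
  also have "\<dots> = cnj c * ip y x" by (simp add: ip_cnj[of y x, symmetric])
  finally show ?thesis .
qed

lemma parallel: "Re (ip (u+v) (u+v)) \<le> 2 * (Re (ip u u) + Re (ip v v))"
proof -
  have "ip (u+v) (u+v) + ip (u-v) (u-v) = 2 * (ip u u + ip v v)"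
    by (simp add: ip_add_l ip_add_r ip_diff_l ip_diff_r algebra_simps)
  hence "Re (ip (u+v) (u+v)) + Re (ip (u-v) (u-v)) = 2 * (Re (ip u u) + Re (ip v v))"
    by (metis plus_complex.sel(1) Re_complex_of_real times_complex.sel(1) mult_2)
  thus ?thesis using ip_nonneg[of "u-v"] by linarith
qed

lemma hnorm_nonneg: "hnorm ip x \<ge> 0" by (simp add: hnorm_def ip_nonneg)

lemma hnorm_add: "hnorm ip (u+v) \<le> 2 * (hnorm ip u + hnorm ip v)"
proof -
  define a where "a = Re (ip u u)"
  define b where "b = Re (ip v v)"
  have a0: "a \<ge> 0" "b \<ge> 0" using ip_nonneg a_def b_def by auto
  have eq0: "(2 * (sqrt a + sqrt b))^2 = 4 * ((sqrt a)^2 + (sqrt b)^2 + 2 * (sqrt a * sqrt b))"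
    by algebra
  have eq: "4 * ((sqrt a)^2 + (sqrt b)^2 + 2 * (sqrt a * sqrt b)) = 4 * (a + b + 2 * (sqrt a * sqrt b))"
    using a0 by simp
  have s0: "0 \<le> sqrt a * sqrt b" using a0 by simp
  have "Re (ip (u+v) (u+v)) \<le> 2 * (a + b)" using parallel[of u v] unfolding a_def b_def .
  also have "\<dots> \<le> 4 * (a + b + 2 * (sqrt a * sqrt b))" using a0 s0 by (simp add: algebra_simps)
  also have "\<dots> = (2 * (sqrt a + sqrt b))^2" using eq0 eq by simp
  finally have "Re (ip (u+v) (u+v)) \<le> (2 * (sqrt a + sqrt b))^2" .
  thus ?thesis unfolding hnorm_def a_def b_def
    by (intro real_le_lsqrt) (auto simp: ip_nonneg)
qed

lemma hnorm_sc: "hnorm ip (sc c u) = cmod c * hnorm ip u"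
proof -
  have "ip (sc c u) (sc c u) = (c * cnj c) * ip u u"
    by (simp add: ip_sc_l ip_sc_r algebra_simps)
  also have "... = of_real ((cmod c)^2) * ip u u" using complex_norm_square[of c] by metis
  finally have "Re (ip (sc c u) (sc c u)) = (cmod c)^2 * Re (ip u u)" by simp
  thus ?thesis unfolding hnorm_def by (simp add: real_sqrt_mult)
qed

lemma bounded_add:
  assumes "bounded_op sc ip a" "bounded_op sc ip b"
  shows "bounded_op sc ip (\<lambda>x. a x + b x)"
proof -
  obtain Ka where Ka: "\<And>x. hnorm ip (a x) \<le> Ka * hnorm ip x" using assms(1) unfolding bounded_op_def by blast
  obtain Kb where Kb: "\<And>x. hnorm ip (b x) \<le> Kb * hnorm ip x" using assms(2) unfolding bounded_op_def by blast
  have "hnorm ip (a x + b x) \<le> (2 * (Ka + Kb)) * hnorm ip x" for x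
    using hnorm_add[of "a x" "b x"] Ka[of x] Kb[of x] by (simp add: algebra_simps)
  moreover have "a (x + y) + b (x + y) = a x + b x + (a y + b y)" for x y
    using assms unfolding bounded_op_def by (simp add: algebra_simps)
  moreover have "a (sc c x) + b (sc c x) = sc c (a x + b x)" for c x
    using assms unfolding bounded_op_def by (simp add: sc_add)
  ultimately show ?thesis unfolding bounded_op_def by blast
qed

lemma bounded_sc:
  assumes "bounded_op sc ip a"
  shows "bounded_op sc ip (\<lambda>x. sc c (a x))"
proof -
  obtain Ka where Ka: "\<And>x. hnorm ip (a x) \<le> Ka * hnorm ip x" using assms(1) unfolding bounded_op_def by blast
  have "hnorm ip (sc c (a x)) \<le> (cmod c * Ka) * hnorm ip x" for x
    using Ka[of x] by (simp add: hnorm_sc mult.assoc mult_left_mono)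
  moreover have "sc c (a (x + y)) = sc c (a x) + sc c (a y)" for x y
    using assms unfolding bounded_op_def by (simp add: sc_add)
  moreover have "sc c (a (sc d x)) = sc d (sc c (a x))" for d x
    using assms unfolding bounded_op_def by (simp add: sc_scale mult.commute)
  ultimately show ?thesis unfolding bounded_op_def by blast
qed

lemma bounded_comp:
  assumes "bounded_op sc ip a" "bounded_op sc ip b"
  shows "bounded_op sc ip (a \<circ> b)"
proof -
  obtain Ka where Ka: "\<And>x. hnorm ip (a x) \<le> Ka * hnorm ip x" using assms(1) unfolding bounded_op_def by blast
  obtain Kb where Kb: "\<And>x. hnorm ip (b x) \<le> Kb * hnorm ip x" using assms(2) unfolding bounded_op_def by blast
  have "hnorm ip (a (b x)) \<le> (max Ka 0 * max Kb 0) * hnorm ip x" for x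
  proof -
    have "hnorm ip (a (b x)) \<le> max Ka 0 * hnorm ip (b x)"
      using Ka[of "b x"] hnorm_nonneg[of "b x"] by (smt (verit) mult_right_mono)
    also have "... \<le> max Ka 0 * (max Kb 0 * hnorm ip x)"
      using Kb[of x] hnorm_nonneg[of x]
      by (intro mult_left_mono) (auto intro: order_trans[OF _ mult_right_mono[OF max.cobounded1]])
    finally show ?thesis by (simp add: mult.assoc)
  qed
  moreover have "(a \<circ> b) (x + y) = (a \<circ> b) x + (a \<circ> b) y" for x y
    using assms unfolding bounded_op_def by simp
  moreover have "(a \<circ> b) (sc c x) = sc c ((a \<circ> b) x)" for c x
    using assms unfolding bounded_op_def by simp
  ultimately show ?thesis unfolding bounded_op_def by auto
qed


lemma comm_mono: "X \<subseteq> Y \<Longrightarrow> commutant sc ip Y \<subseteq> commutant sc ip X"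
  unfolding commutant_def by blast

lemma sub_bicomm: "\<forall>T\<in>X. bounded_op sc ip T \<Longrightarrow> X \<subseteq> commutant sc ip (commutant sc ip X)"
  unfolding commutant_def by auto

lemma adj_unique:
  assumes "\<forall>x y. ip (T x) y = ip x (S1 y)" "\<forall>x y. ip (T x) y = ip x (S2 y)"
  shows "S1 = S2"
proof
  fix y
  define w where "w = S1 y - S2 y"
  have "ip w w = ip w (S1 y) - ip w (S2 y)" unfolding w_def[symmetric, of] by (simp add: w_def ip_diff_r)
  also have "... = 0" using assms by (metis diff_self)
  finally have "w = 0" using ip_zero by blast
  thus "S1 y = S2 y" unfolding w_def by simp
qed

lemma vn_closed:
  assumes "von_neumann_algebra sc ip C" "bounded_op sc ip f"
    "\<And>R. R \<in> commutant sc ip C \<Longrightarrow> f \<circ> R = R \<circ> f"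
  shows "f \<in> C"
proof -
  have "f \<in> commutant sc ip (commutant sc ip C)"
    using assms(2,3) unfolding commutant_def by auto
  thus ?thesis using assms(1) unfolding von_neumann_algebra_def by simp
qed

lemma comm_elem:
  assumes "R \<in> commutant sc ip C"
  shows "bounded_op sc ip R" "\<And>T. T \<in> C \<Longrightarrow> R \<circ> T = T \<circ> R"
  using assms unfolding commutant_def by auto

lemma vn_bounded: "von_neumann_algebra sc ip C \<Longrightarrow> a \<in> C \<Longrightarrow> bounded_op sc ip a"
  unfolding von_neumann_algebra_def by blast

lemma vn_add:
  assumes C: "von_neumann_algebra sc ip C" and ab: "a \<in> C" "b \<in> C"
  shows "(\<lambda>x. a x + b x) \<in> C"
proof (rule vn_closed[OF C])
  show "bounded_op sc ip (\<lambda>x. a x + b x)" using bounded_add vn_bounded[OF C] ab by blast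
  fix R assume R: "R \<in> commutant sc ip C"
  have Ra: "R (a x) = a (R x)" "R (b x) = b (R x)" for x
    using comm_elem(2)[OF R ab(1)] comm_elem(2)[OF R ab(2)] by (metis comp_apply)+
  have "R (a x + b x) = R (a x) + R (b x)" for x
    using comm_elem(1)[OF R] unfolding bounded_op_def by blast
  thus "(\<lambda>x. a x + b x) \<circ> R = R \<circ> (\<lambda>x. a x + b x)" using Ra by (auto simp: fun_eq_iff)
qed

lemma vn_sc:
  assumes C: "von_neumann_algebra sc ip C" and ab: "a \<in> C"
  shows "(\<lambda>x. sc c (a x)) \<in> C"
proof (rule vn_closed[OF C])
  show "bounded_op sc ip (\<lambda>x. sc c (a x))" using bounded_sc vn_bounded[OF C] ab by blast
  fix R assume R: "R \<in> commutant sc ip C"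
  have Ra: "R (a x) = a (R x)" for x
    using comm_elem(2)[OF R ab(1)] by (metis comp_apply)
  have "R (sc c y) = sc c (R y)" for y
    using comm_elem(1)[OF R] unfolding bounded_op_def by blast
  thus "(\<lambda>x. sc c (a x)) \<circ> R = R \<circ> (\<lambda>x. sc c (a x))" using Ra by (auto simp: fun_eq_iff)
qed

lemma vn_comp:
  assumes C: "von_neumann_algebra sc ip C" and ab: "a \<in> C" "b \<in> C"
  shows "a \<circ> b \<in> C"
proof (rule vn_closed[OF C])
  show "bounded_op sc ip (a \<circ> b)" using bounded_comp vn_bounded[OF C] ab by blast
  fix R assume R: "R \<in> commutant sc ip C"
  have Ra: "R (a x) = a (R x)" "R (b x) = b (R x)" for x
    using comm_elem(2)[OF R ab(1)] comm_elem(2)[OF R ab(2)] by (metis comp_apply)+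
  thus "(a \<circ> b) \<circ> R = R \<circ> (a \<circ> b)" by (auto simp: fun_eq_iff)
qed

lemma Inter_V:
  assumes K: "\<K> \<subseteq> abelian_subalgebras sc ip A" "\<K> \<noteq> {}"
  shows "\<Inter>\<K> \<in> abelian_subalgebras sc ip A"
proof -
  obtain K0 where K0: "K0 \<in> \<K>" using K by blast
  have KV: "\<And>K. K \<in> \<K> \<Longrightarrow> K \<subseteq> A \<and> von_neumann_algebra sc ip K \<and> id \<in> K \<and> (\<forall>a\<in>K. \<forall>b\<in>K. a \<circ> b = b \<circ> a)"
    using K unfolding abelian_subalgebras_def by blast
  have bd: "\<forall>T\<in>\<Inter>\<K>. bounded_op sc ip T" using KV K0 vn_bounded by blast
  have adj: "\<forall>T\<in>\<Inter>\<K>. \<exists>S\<in>\<Inter>\<K>. \<forall>x y. ip (T x) y = ip x (S y)"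
  proof
    fix T assume T: "T \<in> \<Inter>\<K>"
    obtain S where S: "S \<in> K0" "\<forall>x y. ip (T x) y = ip x (S y)"
      using KV[OF K0] T K0 unfolding von_neumann_algebra_def by blast
    have "S \<in> K" if KK: "K \<in> \<K>" for K
    proof -
      obtain S' where "S' \<in> K" "\<forall>x y. ip (T x) y = ip x (S' y)"
        using KV[OF KK] T KK unfolding von_neumann_algebra_def by blast
      thus ?thesis using adj_unique[OF S(2)] by metis
    qed
    thus "\<exists>S\<in>\<Inter>\<K>. \<forall>x y. ip (T x) y = ip x (S y)" using S by blast
  qed
  have bic: "commutant sc ip (commutant sc ip (\<Inter>\<K>)) = \<Inter>\<K>"
  proof
    show "\<Inter>\<K> \<subseteq> commutant sc ip (commutant sc ip (\<Inter>\<K>))" using sub_bicomm bd by blast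
    have "commutant sc ip (commutant sc ip (\<Inter>\<K>)) \<subseteq> K" if "K \<in> \<K>" for K
    proof -
      have "commutant sc ip K \<subseteq> commutant sc ip (\<Inter>\<K>)" using comm_mono that by blast
      hence "commutant sc ip (commutant sc ip (\<Inter>\<K>)) \<subseteq> commutant sc ip (commutant sc ip K)"
        using comm_mono by blast
      thus ?thesis using KV[OF that] unfolding von_neumann_algebra_def by simp
    qed
    thus "commutant sc ip (commutant sc ip (\<Inter>\<K>)) \<subseteq> \<Inter>\<K>" by blast
  qed
  have sub: "\<Inter>\<K> \<subseteq> A" using KV K0 by blast
  have idm: "id \<in> \<Inter>\<K>" using KV by blast
  have cm: "\<forall>a\<in>\<Inter>\<K>. \<forall>b\<in>\<Inter>\<K>. a \<circ> b = b \<circ> a" using KV K0 by blast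
  have vn: "von_neumann_algebra sc ip (\<Inter>\<K>)" unfolding von_neumann_algebra_def
    using bd adj bic by (intro conjI)
  show ?thesis unfolding abelian_subalgebras_def mem_Collect_eq by (intro conjI sub vn idm cm)
qed


definition Pd :: "('h \<Rightarrow> 'h) set \<Rightarrow> 'h \<Rightarrow> (('h \<Rightarrow> 'h) set \<times> (('h \<Rightarrow> 'h) \<Rightarrow> complex)) set \<Rightarrow> ('h \<Rightarrow> 'h) set \<Rightarrow> bool" where
  "Pd A \<psi> W C \<longleftrightarrow> (\<forall>C'\<in>abelian_subalgebras sc ip A. C \<subseteq> C' \<and> rank_one_proj sc ip \<psi> \<in> C' \<longrightarrow>
            Xset sc C' (rank_one_proj sc ip \<psi>) \<subseteq> fiber W C')"

lemma mu0_Pd: "mu0 sc ip A \<psi> W C = (if Pd A \<psi> W C then 1 else 0)"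
  unfolding mu0_def Pd_def by simp

lemma V_vn: "C \<in> abelian_subalgebras sc ip A \<Longrightarrow> von_neumann_algebra sc ip C"
  unfolding abelian_subalgebras_def by blast

context
  fixes \<psi> :: 'h
  assumes unit: "ip \<psi> \<psi> = 1"
begin

abbreviation "p \<equiv> rank_one_proj sc ip \<psi>"

lemma pp: "p \<circ> p = p"
  unfolding rank_one_proj_def by (auto simp: fun_eq_iff ip_sc_r unit sc_scale)

lemma gel_zero: "l \<in> gelfand_spectrum sc C \<Longrightarrow> a \<notin> C \<Longrightarrow> l a = 0"
  unfolding gelfand_spectrum_def by simp
lemma gel_mult: "l \<in> gelfand_spectrum sc C \<Longrightarrow> a \<in> C \<Longrightarrow> b \<in> C \<Longrightarrow> l (a \<circ> b) = l a * l b"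
  unfolding gelfand_spectrum_def by simp
lemma gel_sc: "l \<in> gelfand_spectrum sc C \<Longrightarrow> a \<in> C \<Longrightarrow> l (\<lambda>x. sc c (a x)) = c * l a"
  unfolding gelfand_spectrum_def by simp
lemma X_g: "l \<in> Xset sc C b \<Longrightarrow> l \<in> gelfand_spectrum sc C"
  unfolding Xset_def by simp
lemma X_pos: "l \<in> Xset sc C b \<Longrightarrow> Im (l b) = 0 \<and> Re (l b) > 0"
  unfolding Xset_def by simp

lemma X_p_in: assumes "l \<in> Xset sc C p" shows "p \<in> C"
proof (rule ccontr)
  assume "p \<notin> C"
  hence "l p = 0" using gel_zero[OF X_g[OF assms]] by blast
  thus False using X_pos[OF assms] by simp
qed

lemma lp1:
  assumes "l \<in> Xset sc C p"
  shows "l p = 1"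
proof -
  have pC: "p \<in> C" using X_p_in assms .
  have g: "l \<in> gelfand_spectrum sc C" using X_g[OF assms] .
  have "l (p \<circ> p) = l p * l p" using gel_mult[OF g pC pC] .
  hence "l p = l p * l p" using pp by simp
  moreover have "l p \<noteq> 0" using X_pos[OF assms] by auto
  ultimately show ?thesis by simp
qed

lemma lval:
  assumes C: "von_neumann_algebra sc ip C" and l: "l \<in> Xset sc C p" and a: "a \<in> C"
  shows "l a = ip \<psi> (a \<psi>)"
proof -
  have pC: "p \<in> C" using X_p_in l .
  have g: "l \<in> gelfand_spectrum sc C" using X_g[OF l] .
  have l1: "l p = 1" using lp1 l .
  have apC: "a \<circ> p \<in> C" using vn_comp[OF C a pC] .
  have ba: "bounded_op sc ip a" using vn_bounded[OF C a] .
  have asc: "a (sc k v) = sc k (a v)" for k v using ba unfolding bounded_op_def by blast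
  have eq: "p \<circ> (a \<circ> p) = (\<lambda>x. sc (ip \<psi> (a \<psi>)) (p x))"
  proof
    fix x
    have "(p \<circ> (a \<circ> p)) x = sc (ip \<psi> x * ip \<psi> (a \<psi>)) \<psi>"
      unfolding rank_one_proj_def by (simp add: asc ip_sc_r)
    also have "\<dots> = sc (ip \<psi> (a \<psi>)) (p x)"
      unfolding rank_one_proj_def by (simp add: sc_scale mult.commute)
    finally show "(p \<circ> (a \<circ> p)) x = sc (ip \<psi> (a \<psi>)) (p x)" .
  qed
  have "l (p \<circ> (a \<circ> p)) = l p * (l a * l p)"
    using gel_mult[OF g pC apC] gel_mult[OF g a pC] by simp
  also have "... = l a" using l1 by simp
  finally have "l a = l (\<lambda>x. sc (ip \<psi> (a \<psi>)) (p x))" using eq by simp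
  also have "... = ip \<psi> (a \<psi>) * l p" using gel_sc[OF g pC] .
  finally show ?thesis using l1 by simp
qed

lemma eqX:
  assumes C: "von_neumann_algebra sc ip C" and l: "l \<in> Xset sc C p" and l': "l' \<in> Xset sc C p"
  shows "l = l'"
proof
  fix a
  show "l a = l' a"
  proof (cases "a \<in> C")
    case True thus ?thesis using lval[OF C l] lval[OF C l'] by simp
  next
    case False thus ?thesis using gel_zero[OF X_g[OF l]] gel_zero[OF X_g[OF l']] by simp
  qed
qed

lemma restr:
  assumes C0: "von_neumann_algebra sc ip C0" and sub: "C0 \<subseteq> C1" and pC: "p \<in> C0"
    and l1: "l1 \<in> Xset sc C1 p"
  shows "restrict_char l1 C0 \<in> Xset sc C0 p"
proof -
  have g: "l1 \<in> gelfand_spectrum sc C1" using l1 unfolding Xset_def by auto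
  have l1p: "l1 p = 1" using lp1 l1 .
  let ?l = "restrict_char l1 C0"
  have gA: "\<forall>a\<in>C1. \<forall>b\<in>C1. l1 (\<lambda>x. a x + b x) = l1 a + l1 b"
    using g unfolding gelfand_spectrum_def mem_Collect_eq by (elim conjE)
  have gS: "\<forall>a\<in>C1. \<forall>c. l1 (\<lambda>x. sc c (a x)) = c * l1 a"
    using g unfolding gelfand_spectrum_def mem_Collect_eq by (elim conjE)
  have gM: "\<forall>a\<in>C1. \<forall>b\<in>C1. l1 (a \<circ> b) = l1 a * l1 b"
    using g unfolding gelfand_spectrum_def mem_Collect_eq by (elim conjE)
  have "?l \<in> gelfand_spectrum sc C0"
    unfolding gelfand_spectrum_def mem_Collect_eq
  proof (intro conjI ballI allI impI)
    fix a assume "a \<notin> C0" thus "?l a = 0" unfolding restrict_char_def by simp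
  next
    fix a b assume ab: "a \<in> C0" "b \<in> C0"
    have ab1: "a \<in> C1" "b \<in> C1" using ab sub by auto
    show "?l (\<lambda>x. a x + b x) = ?l a + ?l b"
      using vn_add[OF C0 ab] ab gA ab1 unfolding restrict_char_def by simp
    show "?l (a \<circ> b) = ?l a * ?l b"
      using vn_comp[OF C0 ab] ab gM ab1 unfolding restrict_char_def by simp
  next
    fix a c assume ab: "a \<in> C0"
    have ab1: "a \<in> C1" using ab sub by auto
    show "?l (\<lambda>x. sc c (a x)) = c * ?l a"
      using vn_sc[OF C0 ab] ab gS ab1 unfolding restrict_char_def by simp
  next
    show "\<exists>a\<in>C0. ?l a \<noteq> 0" using pC l1p unfolding restrict_char_def by (intro bexI[of _ p]) auto
  qed
  thus ?thesis using pC l1p unfolding Xset_def restrict_char_def by simp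
qed

lemma key:
  assumes CV: "C \<in> abelian_subalgebras sc ip A"
  shows "(\<forall>W. Pd A \<psi> W C) \<or>
     (\<exists>C0 l0. (\<forall>W. Pd A \<psi> W C \<longrightarrow> l0 \<in> fiber W C0) \<and>
              (\<forall>W\<in>opens_star sc ip A. l0 \<in> fiber W C0 \<longrightarrow> Pd A \<psi> W C))"
proof -
  define K where "K = {C'\<in>abelian_subalgebras sc ip A. C \<subseteq> C' \<and> p \<in> C' \<and> Xset sc C' p \<noteq> {}}"
  show ?thesis
  proof (cases "K = {}")
    case True
    hence "\<forall>W. Pd A \<psi> W C" unfolding Pd_def K_def by blast
    thus ?thesis by blast
  next
    case False
    define C0 where "C0 = \<Inter>K"
    have C0V: "C0 \<in> abelian_subalgebras sc ip A" unfolding C0_def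
      using Inter_V[of K A] False K_def by blast
    have C0vn: "von_neumann_algebra sc ip C0" using V_vn C0V .
    have CC0: "C \<subseteq> C0" "p \<in> C0" unfolding C0_def K_def by auto
    obtain C1 l1 where C1: "C1 \<in> K" "l1 \<in> Xset sc C1 p" using False K_def by blast
    define l0 where "l0 = restrict_char l1 C0"
    have l0X: "l0 \<in> Xset sc C0 p" unfolding l0_def
      using restr[OF C0vn _ CC0(2) C1(2)] C1(1) C0_def by blast
    have fwd: "\<forall>W. Pd A \<psi> W C \<longrightarrow> l0 \<in> fiber W C0"
      using l0X C0V CC0 unfolding Pd_def by blast
    have bwd: "\<forall>W\<in>opens_star sc ip A. l0 \<in> fiber W C0 \<longrightarrow> Pd A \<psi> W C"
    proof (intro ballI impI)
      fix W assume W: "W \<in> opens_star sc ip A" and l0W: "l0 \<in> fiber W C0"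
      show "Pd A \<psi> W C" unfolding Pd_def
      proof (intro ballI impI subsetI)
        fix C' l assume C'V: "C' \<in> abelian_subalgebras sc ip A" and C': "C \<subseteq> C' \<and> p \<in> C'"
          and l: "l \<in> Xset sc C' p"
        have "C' \<in> K" using C'V C' l K_def by blast
        hence sub: "C0 \<subseteq> C'" unfolding C0_def by blast
        have "restrict_char l C0 \<in> Xset sc C0 p" using restr[OF C0vn sub CC0(2) l] .
        hence req: "restrict_char l C0 = l0" using eqX[OF C0vn _ l0X] by blast
        have lg: "l \<in> gelfand_spectrum sc C'" using l unfolding Xset_def by auto
        have up: "\<forall>C\<in>abelian_subalgebras sc ip A. \<forall>C'\<in>abelian_subalgebras sc ip A.
            \<forall>l\<in>fiber W C. \<forall>l'\<in>gelfand_spectrum sc C'.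
              C \<subseteq> C' \<and> restrict_char l' C = l \<longrightarrow> l' \<in> fiber W C'"
          using W unfolding opens_star_def mem_Collect_eq by (elim conjE)
        show "l \<in> fiber W C'"
          using up[rule_format, OF C0V C'V l0W lg] sub req by blast
      qed
    qed
    show ?thesis using fwd bwd by blast
  qed
qed

end

end

lemma sup01:
  fixes f :: "'i \<Rightarrow> real"
  assumes "I \<noteq> {}" "\<forall>i\<in>I. f i = (if P i then 1 else 0)"
  shows "(SUP i\<in>I. f i) = (if \<exists>i\<in>I. P i then 1 else 0)"
proof (cases "\<exists>i\<in>I. P i")
  case True
  then obtain j where j: "j \<in> I" "P j" by blast
  have bdd: "bdd_above (f ` I)" using assms(2) by (intro bdd_aboveI[of _ 1]) auto
  have "f j \<le> (SUP i\<in>I. f i)" using cSUP_upper[OF j(1) bdd] .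
  moreover have "(SUP i\<in>I. f i) \<le> 1" using assms by (intro cSUP_least) auto
  ultimately show ?thesis using j assms(2) True by auto
next
  case False
  hence "(SUP i\<in>I. f i) = (SUP i\<in>I. (0::real))" using assms(2) by (intro SUP_cong) auto
  thus ?thesis using False assms(1) by simp
qed

theorem proposition4p10:
  fixes sc :: "complex \<Rightarrow> 'h::ab_group_add \<Rightarrow> 'h"
    and ip :: "'h \<Rightarrow> 'h \<Rightarrow> complex"
    and A :: "('h \<Rightarrow> 'h) set"
    and \<psi> :: 'h
  assumes "hilbert_space sc ip"
    and "von_neumann_algebra sc ip A"
    and "ip \<psi> \<psi> = 1"
  shows "(\<forall>U\<in>opens_star sc ip A.
            (\<forall>C\<in>abelian_subalgebras sc ip A. 0 \<le> mu0 sc ip A \<psi> U C \<and> mu0 sc ip A \<psi> U C \<le> 1) \<and>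
            (\<forall>C\<in>abelian_subalgebras sc ip A. \<forall>C'\<in>abelian_subalgebras sc ip A.
               C \<subseteq> C' \<longrightarrow> mu0 sc ip A \<psi> U C \<le> mu0 sc ip A \<psi> U C'))
       \<and> (\<forall>C\<in>abelian_subalgebras sc ip A.
            (\<forall>U\<in>opens_star sc ip A. \<forall>V\<in>opens_star sc ip A.
               U \<subseteq> V \<longrightarrow> mu0 sc ip A \<psi> U C \<le> mu0 sc ip A \<psi> V C)
          \<and> (\<forall>U\<in>opens_star sc ip A. \<forall>V\<in>opens_star sc ip A.
               mu0 sc ip A \<psi> U C + mu0 sc ip A \<psi> V C
                 = mu0 sc ip A \<psi> (U \<inter> V) C + mu0 sc ip A \<psi> (U \<union> V) C)
          \<and> (\<forall>(I::'i set) (Us::'i \<Rightarrow> _).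
               I \<noteq> {} \<and> (\<forall>i\<in>I. Us i \<in> opens_star sc ip A) \<and>
               (\<forall>i\<in>I. \<forall>j\<in>I. \<exists>k\<in>I. Us i \<subseteq> Us k \<and> Us j \<subseteq> Us k) \<longrightarrow>
               mu0 sc ip A \<psi> (\<Union>i\<in>I. Us i) C = (SUP i\<in>I. mu0 sc ip A \<psi> (Us i) C)))"
proof -
  note H = assms(1)
  note mP = mu0_Pd[OF H]
  have monoC: "Pd sc ip A \<psi> U C \<Longrightarrow> C \<subseteq> C' \<Longrightarrow> Pd sc ip A \<psi> U C'" for U C C'
    unfolding Pd_def[OF H] by blast
  have monoW: "Pd sc ip A \<psi> U C \<Longrightarrow> U \<subseteq> V \<Longrightarrow> Pd sc ip A \<psi> V C" for U V C
    unfolding Pd_def[OF H] fiber_def by blast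
  have inter: "Pd sc ip A \<psi> (U \<inter> V) C \<longleftrightarrow> Pd sc ip A \<psi> U C \<and> Pd sc ip A \<psi> V C" for U V C
    unfolding Pd_def[OF H] fiber_def by blast
  have part1: "\<forall>U\<in>opens_star sc ip A.
            (\<forall>C\<in>abelian_subalgebras sc ip A. 0 \<le> mu0 sc ip A \<psi> U C \<and> mu0 sc ip A \<psi> U C \<le> 1) \<and>
            (\<forall>C\<in>abelian_subalgebras sc ip A. \<forall>C'\<in>abelian_subalgebras sc ip A.
               C \<subseteq> C' \<longrightarrow> mu0 sc ip A \<psi> U C \<le> mu0 sc ip A \<psi> U C')"
  proof (intro ballI conjI impI)
    fix U C assume "C \<in> abelian_subalgebras sc ip A"
    show "0 \<le> mu0 sc ip A \<psi> U C" unfolding mP by simp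
    show "mu0 sc ip A \<psi> U C \<le> 1" unfolding mP by simp
  next
    fix U and C C' :: "('h \<Rightarrow> 'h) set" assume CC: "C \<subseteq> C'"
    have "Pd sc ip A \<psi> U C \<Longrightarrow> Pd sc ip A \<psi> U C'" using monoC CC by blast
    thus "mu0 sc ip A \<psi> U C \<le> mu0 sc ip A \<psi> U C'" unfolding mP by simp
  qed
  have part2: "(\<forall>U\<in>opens_star sc ip A. \<forall>V\<in>opens_star sc ip A.
               U \<subseteq> V \<longrightarrow> mu0 sc ip A \<psi> U C \<le> mu0 sc ip A \<psi> V C)
          \<and> (\<forall>U\<in>opens_star sc ip A. \<forall>V\<in>opens_star sc ip A.
               mu0 sc ip A \<psi> U C + mu0 sc ip A \<psi> V C
                 = mu0 sc ip A \<psi> (U \<inter> V) C + mu0 sc ip A \<psi> (U \<union> V) C)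
          \<and> (\<forall>(I::'i set) (Us::'i \<Rightarrow> _).
               I \<noteq> {} \<and> (\<forall>i\<in>I. Us i \<in> opens_star sc ip A) \<and>
               (\<forall>i\<in>I. \<forall>j\<in>I. \<exists>k\<in>I. Us i \<subseteq> Us k \<and> Us j \<subseteq> Us k) \<longrightarrow>
               mu0 sc ip A \<psi> (\<Union>i\<in>I. Us i) C = (SUP i\<in>I. mu0 sc ip A \<psi> (Us i) C))"
    if CV: "C \<in> abelian_subalgebras sc ip A" for C
  proof -
    from key[OF H assms(3) CV] have ud:
      "(\<forall>U\<in>opens_star sc ip A. \<forall>V\<in>opens_star sc ip A.
          Pd sc ip A \<psi> (U \<union> V) C \<longrightarrow> Pd sc ip A \<psi> U C \<or> Pd sc ip A \<psi> V C) \<and>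
       (\<forall>(I::'i set) Us. (\<forall>i\<in>I. Us i \<in> opens_star sc ip A) \<longrightarrow>
          Pd sc ip A \<psi> (\<Union>i\<in>I. Us i) C \<longrightarrow> (\<exists>i\<in>I. Pd sc ip A \<psi> (Us i) C) \<or> I = {})"
    proof
      assume a: "\<forall>W. Pd sc ip A \<psi> W C"
      show ?thesis using a by auto
    next
      assume "\<exists>C0 l0. (\<forall>W. Pd sc ip A \<psi> W C \<longrightarrow> l0 \<in> fiber W C0) \<and>
              (\<forall>W\<in>opens_star sc ip A. l0 \<in> fiber W C0 \<longrightarrow> Pd sc ip A \<psi> W C)"
      then obtain C0 l0 where f: "\<forall>W. Pd sc ip A \<psi> W C \<longrightarrow> l0 \<in> fiber W C0"
        and b: "\<forall>W\<in>opens_star sc ip A. l0 \<in> fiber W C0 \<longrightarrow> Pd sc ip A \<psi> W C" by blast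
      show ?thesis
      proof (intro conjI ballI allI impI)
        fix U V assume U: "U \<in> opens_star sc ip A" and V: "V \<in> opens_star sc ip A"
          and P: "Pd sc ip A \<psi> (U \<union> V) C"
        have "l0 \<in> fiber (U \<union> V) C0" using f P by blast
        hence "l0 \<in> fiber U C0 \<or> l0 \<in> fiber V C0" unfolding fiber_def by simp
        thus "Pd sc ip A \<psi> U C \<or> Pd sc ip A \<psi> V C" using b U V by blast
      next
        fix I :: "'i set" and Us assume O: "\<forall>i\<in>I. Us i \<in> opens_star sc ip A"
          and P: "Pd sc ip A \<psi> (\<Union>i\<in>I. Us i) C"
        have "l0 \<in> fiber (\<Union>i\<in>I. Us i) C0" using f P by blast
        then obtain i where i: "i \<in> I" "l0 \<in> fiber (Us i) C0" unfolding fiber_def by blast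
        thus "(\<exists>i\<in>I. Pd sc ip A \<psi> (Us i) C) \<or> I = {}" using b O by blast
      qed
    qed
    have un: "Pd sc ip A \<psi> (U \<union> V) C \<longleftrightarrow> Pd sc ip A \<psi> U C \<or> Pd sc ip A \<psi> V C"
      if "U \<in> opens_star sc ip A" "V \<in> opens_star sc ip A" for U V
    proof
      show "Pd sc ip A \<psi> (U \<union> V) C \<Longrightarrow> Pd sc ip A \<psi> U C \<or> Pd sc ip A \<psi> V C"
        using ud[THEN conjunct1] that by blast
      show "Pd sc ip A \<psi> U C \<or> Pd sc ip A \<psi> V C \<Longrightarrow> Pd sc ip A \<psi> (U \<union> V) C"
        using monoW[of U C "U \<union> V"] monoW[of V C "U \<union> V"] by blast
    qed
    have dir: "Pd sc ip A \<psi> (\<Union>i\<in>I. Us i) C \<longleftrightarrow> (\<exists>i\<in>I. Pd sc ip A \<psi> (Us i) C)"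
      if "I \<noteq> {}" "\<forall>i\<in>I. Us i \<in> opens_star sc ip A" for I :: "'i set" and Us
    proof
      assume P: "Pd sc ip A \<psi> (\<Union>i\<in>I. Us i) C"
      have "(\<exists>i\<in>I. Pd sc ip A \<psi> (Us i) C) \<or> I = {}"
        using ud[THEN conjunct2, rule_format, OF that(2)[rule_format] P] .
      thus "\<exists>i\<in>I. Pd sc ip A \<psi> (Us i) C" using that(1) by blast
    next
      assume "\<exists>i\<in>I. Pd sc ip A \<psi> (Us i) C"
      then obtain i where i: "i \<in> I" "Pd sc ip A \<psi> (Us i) C" by blast
      have "Us i \<subseteq> (\<Union>i\<in>I. Us i)" using i(1) by blast
      thus "Pd sc ip A \<psi> (\<Union>i\<in>I. Us i) C" using monoW i(2) by blast
    qed
    show ?thesis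
    proof (intro conjI ballI impI allI)
      fix U V assume "U \<in> opens_star sc ip A" "V \<in> opens_star sc ip A" and UV: "U \<subseteq> V"
      have "Pd sc ip A \<psi> U C \<Longrightarrow> Pd sc ip A \<psi> V C" using monoW UV by blast
      thus "mu0 sc ip A \<psi> U C \<le> mu0 sc ip A \<psi> V C" unfolding mP by simp
    next
      fix U V assume UV: "U \<in> opens_star sc ip A" "V \<in> opens_star sc ip A"
      have e1: "Pd sc ip A \<psi> (U \<union> V) C \<longleftrightarrow> Pd sc ip A \<psi> U C \<or> Pd sc ip A \<psi> V C"
        using un[OF UV] .
      have e2: "Pd sc ip A \<psi> (U \<inter> V) C \<longleftrightarrow> Pd sc ip A \<psi> U C \<and> Pd sc ip A \<psi> V C"
        using inter .
      show "mu0 sc ip A \<psi> U C + mu0 sc ip A \<psi> V C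
                 = mu0 sc ip A \<psi> (U \<inter> V) C + mu0 sc ip A \<psi> (U \<union> V) C"
        unfolding mP e1 e2 by simp
    next
      fix I :: "'i set" and Us
      assume h: "I \<noteq> {} \<and> (\<forall>i\<in>I. Us i \<in> opens_star sc ip A) \<and>
               (\<forall>i\<in>I. \<forall>j\<in>I. \<exists>k\<in>I. Us i \<subseteq> Us k \<and> Us j \<subseteq> Us k)"
      have hI: "I \<noteq> {}" and hO: "\<forall>i\<in>I. Us i \<in> opens_star sc ip A" using h by simp_all
      have "(SUP i\<in>I. mu0 sc ip A \<psi> (Us i) C) = (if \<exists>i\<in>I. Pd sc ip A \<psi> (Us i) C then 1 else 0)"
        by (rule sup01[OF hI]) (simp add: mP)
      also have "\<dots> = mu0 sc ip A \<psi> (\<Union>i\<in>I. Us i) C"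
        unfolding mP dir[OF hI hO] ..
      finally show "mu0 sc ip A \<psi> (\<Union>i\<in>I. Us i) C = (SUP i\<in>I. mu0 sc ip A \<psi> (Us i) C)" by simp
    qed
  qed
  show ?thesis by (rule conjI[OF part1], intro ballI, erule part2)
qed

end
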